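(* Let $\gamma(z)=\sum_{n=1}^{\infty} z^{n-1}\left(\frac{1}{n}-\log\frac{n+1}{n}\right)$ for $|z|\le 1$, and for $k=2,3,\ldots$ and $|z|\le1$ let $\mathrm{Li}_k(z)=\sum_{n=1}^{\infty} \frac{z^n}{n^k}$. If $|z|\le 1$, then $$z\gamma(z)=\sum_{k=2}^{\infty}(-1)^k\frac{\mathrm{Li}_k(z)}{k}.$$ If in addition $z\neq 1$, then $$z^2\gamma(z)=z+(1-z)\log(1-z)-\sum_{k=2}^{\infty}\frac{\mathrm{Li}_k(z)-z}{k}.$$
   Context: For $z\neq 0$, $\log z=\ln|z|+i\,\mathrm{Arg}\,z$ with $-\pi<\mathrm{Arg}\,z\le\pi$. The series defining $\gamma(z)$ converges for $|z|\le 1$; $\gamma(z)$ is called the generalized-Euler-constant function. *)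

theory Defs
  imports "HOL-Analysis.Analysis"
begin

definition gen_euler_gamma :: "complex \<Rightarrow> complex" where
  "gen_euler_gamma z =
     (\<Sum>m. z ^ m * (1 / of_nat (Suc m) - Ln (of_nat (Suc (Suc m)) / of_nat (Suc m))))"

definition polylog :: "nat \<Rightarrow> complex \<Rightarrow> complex" where
  "polylog k z = (\<Sum>m. z ^ Suc m / of_nat (Suc m) ^ k)"

end

theory Submission imports Defs "HOL-Real_Asymp.Real_Asymp" begin


lemma dbl_swap:
  fixes f :: "nat \<Rightarrow> nat \<Rightarrow> complex" and M r :: "nat \<Rightarrow> real"
  assumes bnd: "\<And>m j. norm (f m j) \<le> M m * r j"
    and sM: "summable M" and sr: "summable r"
    and M0: "\<And>m. M m \<ge> 0" and r0: "\<And>j. r j \<ge> 0"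
    and rowsum: "\<And>m. (\<lambda>j. f m j) sums A m"
    and colsum: "\<And>j. (\<lambda>m. f m j) sums C j"
  shows "A sums (\<Sum>m. A m) \<and> C sums (\<Sum>m. A m)"
proof -
  define g where "g = (\<lambda>(m::nat,j::nat). M m * r j)"
  have g_abs: "(\<lambda>x. norm (g x)) summable_on (UNIV \<times> UNIV)"
  proof (subst Infinite_Sum.abs_summable_on_Sigma_iff, intro conjI ballI)
    fix m :: nat
    have "(\<lambda>j. norm (M m * r j)) sums (M m * suminf r)"
      using sums_mult[OF summable_sums[OF sr], of "M m"] M0 r0 by (simp add: abs_mult)
    then show "(\<lambda>y. norm (g (m, y))) summable_on UNIV"
      unfolding g_def by (auto intro!: summable_nonneg_imp_summable_on simp: sums_iff)
  next
    have e: "infsum (\<lambda>y. norm (g (m, y))) UNIV = M m * suminf r" for m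
    proof -
      have "(\<lambda>j. norm (M m * r j)) sums (M m * suminf r)"
        using sums_mult[OF summable_sums[OF sr], of "M m"] M0 r0 by (simp add: abs_mult)
      then have "((\<lambda>j. norm (M m * r j)) has_sum (M m * suminf r)) UNIV"
        by (intro sums_nonneg_imp_has_sum) auto
      then show ?thesis unfolding g_def by (simp add: infsumI)
    qed
    have "(\<lambda>m. norm (M m * suminf r)) summable_on UNIV"
      using summable_mult2[OF sM, of "suminf r"] M0 r0 suminf_nonneg[OF sr r0]
      by (intro summable_nonneg_imp_summable_on) (auto simp: abs_mult)
    then show "(\<lambda>x. norm (\<Sum>\<^sub>\<infinity>y. norm (g (x, y)))) summable_on UNIV"
      unfolding e .
  qed
  have F_abs: "(\<lambda>x. norm ((\<lambda>(m,j). f m j) x)) summable_on (UNIV \<times> UNIV)"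
    by (rule Infinite_Sum.abs_summable_on_comparison_test[OF g_abs]) (use bnd M0 r0 in \<open>auto simp: g_def abs_mult\<close>)
  then have F_sum: "(\<lambda>(m,j). f m j) summable_on (UNIV \<times> UNIV)"
    by (rule abs_summable_summable)
  define S where "S = infsum (\<lambda>(m,j). f m j) (UNIV \<times> UNIV)"
  have hs: "((\<lambda>(m,j). f m j) has_sum S) (UNIV \<times> UNIV)"
    using F_sum S_def by auto
  have rowh: "((\<lambda>j. f m j) has_sum A m) UNIV" for m
  proof (rule norm_summable_imp_has_sum[OF _ rowsum])
    show "summable (\<lambda>j. norm (f m j))"
      by (rule summable_comparison_test[of _ "\<lambda>j. M m * r j"]) (auto intro: bnd summable_mult sr)
  qed
  have colh: "((\<lambda>m. f m j) has_sum C j) UNIV" for j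
  proof (rule norm_summable_imp_has_sum[OF _ colsum])
    show "summable (\<lambda>m. norm (f m j))"
      by (rule summable_comparison_test[of _ "\<lambda>m. M m * r j"]) (auto intro: bnd summable_mult2 sM)
  qed
  have "(A has_sum S) UNIV"
    by (rule has_sum_SigmaD[OF hs]) (use rowh in auto)
  then have As: "A sums S" by (rule has_sum_imp_sums)
  have hs2: "((\<lambda>(j,m). f m j) has_sum S) (UNIV \<times> UNIV)"
    using hs by (subst (asm) has_sum_swap) simp
  have "(C has_sum S) UNIV"
    by (rule has_sum_SigmaD[OF hs2]) (use colh in auto)
  then have "C sums S" by (rule has_sum_imp_sums)
  with As show ?thesis by (simp add: sums_iff)
qed



lemma ser_alt:
  fixes x :: real assumes "\<bar>x\<bar> < 1"
  shows "(\<lambda>j. (-1)^j * x^(j+2) / of_nat (j+2)) sums (x - ln (1 + x))"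
proof -
  have h: "(\<lambda>n. - ((-x)^n) / of_nat n) sums ln (1 + x)" by (rule ln_series'[OF assms])
  have "(\<lambda>j. - ((-x)^(j+2)) / of_nat (j+2)) sums (ln (1 + x) - (\<Sum>i<2. - ((-x)^i) / of_nat i))"
    using sums_iff_shift[of "\<lambda>n. - ((-x)^n) / of_nat n" 2 "ln (1 + x) - (\<Sum>i<2. - ((-x)^i) / of_nat i)"] h by simp
  then have "(\<lambda>j. - ((-x)^(j+2)) / of_nat (j+2)) sums (ln (1 + x) - x)"
    by (simp add: numeral_2_eq_2)
  from sums_minus[OF this] show ?thesis
    by (simp add: power_minus' mult_ac)
qed

lemma ser_pos:
  fixes x :: real assumes "\<bar>x\<bar> < 1"
  shows "(\<lambda>j. x^(j+2) / of_nat (j+2)) sums (- ln (1 - x) - x)"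
proof -
  have "\<bar>-x\<bar> < 1" using assms by simp
  from ser_alt[OF this] have "(\<lambda>j. (-1)^j * (-x)^(j+2) / of_nat (j+2)) sums (-x - ln (1 - x))" by simp
  also have "(\<lambda>j. (-1)^j * (-x)^(j+2) / of_nat (j+2)) = (\<lambda>j. x^(j+2) / of_nat (j+2))"
    proof (rule ext)
    fix j :: nat
    have "(-1::real)^j * (-x)^(j+2) = ((-1)^j * (-1)^j) * x^(j+2)"
      by (simp add: power_minus' power_add)
    also have "(-1::real)^j * (-1)^j = 1" by (simp flip: power_add)
    finally show "(-1)^j * (-x)^(j+2) / of_nat (j+2) = x^(j+2) / of_nat (j+2)" by simp
  qed
  finally have "(\<lambda>j. x^(j+2) / of_nat (j+2)) sums (-x - ln (1 - x))" .
  moreover have "-x - ln (1 - x) = - ln (1 - x) - x" by simp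
  ultimately show ?thesis by metis
qed

lemma alt_harm: "(\<lambda>j. (-1)^j / real (j+2)) sums (1 - ln 2)"
proof -
  have "(\<lambda>k. (-1)^(Suc k) / real (Suc (Suc k))) sums (ln 2 - (-1)^0 / real (Suc 0))"
    using alternating_harmonic_series_sums by (subst sums_Suc_iff) simp
  from sums_minus[OF this] show ?thesis by simp
qed



lemma lemF_int:
  fixes z :: complex assumes "norm z < 1"
  shows "(\<lambda>m. z^(m+2) / (of_nat (m+1) * of_nat (m+2))) sums (z + (1 - z) * Ln (1 - z))"
proof -
  define a where "a = (\<lambda>n. z^n / of_nat n)"
  have "norm (-z) < 1" using assms by simp
  from Ln_series'[OF this] have "(\<lambda>n. - (z^n) / of_nat n) sums Ln (1 - z)" by simp
  from sums_minus[OF this] have as: "a sums (- Ln (1 - z))" by (simp add: a_def)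
  have a2: "(\<lambda>m. a (m+2)) sums (- Ln (1 - z) - (\<Sum>i<2. a i))"
    using sums_iff_shift[of a 2 "- Ln (1 - z) - (\<Sum>i<2. a i)"] as by simp
  have "(\<Sum>i<2. a i) = z" by (simp add: a_def numeral_2_eq_2)
  with a2 have a2': "(\<lambda>m. a (m+2)) sums (- Ln (1 - z) - z)" by simp
  have a1: "(\<lambda>m. a (m+1)) sums (- Ln (1 - z) - (\<Sum>i<1. a i))"
    using sums_iff_shift[of a 1 "- Ln (1 - z) - (\<Sum>i<1. a i)"] as by simp
  then have a1': "(\<lambda>m. a (m+1)) sums (- Ln (1 - z))" by (simp add: a_def)
  have d: "(\<lambda>m. z * a (m+1) - a (m+2)) sums (z * (- Ln (1 - z)) - (- Ln (1 - z) - z))"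
    by (intro sums_diff sums_mult a1' a2')
  have e: "z * a (m+1) - a (m+2) = z^(m+2) / (of_nat (m+1) * of_nat (m+2))" for m
  proof -
    have h1: "(of_nat (m+1)::complex) \<noteq> 0" and h2: "(of_nat (m+2)::complex) \<noteq> 0"
      by (simp only: of_nat_eq_0_iff; simp)+
    have "z * a (m+1) - a (m+2) = z^(m+2) * (1 / of_nat (m+1) - 1 / of_nat (m+2))"
      by (simp add: a_def algebra_simps)
    also have "1 / of_nat (m+1) - 1 / of_nat (m+2) = (1::complex) / (of_nat (m+1) * of_nat (m+2))"
      using h1 h2 by (simp add: field_simps)
    finally show ?thesis by simp
  qed
  have f: "z * (- Ln (1 - z)) - (- Ln (1 - z) - z) = z + (1 - z) * Ln (1 - z)"
    by (simp add: algebra_simps)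
  from d show ?thesis unfolding e f .
qed

lemma summable_M: "summable (\<lambda>m. 1 / (real (m+1) * real (m+2)))"
proof (rule summable_comparison_test[of _ "\<lambda>m. inverse (real (Suc m) ^ 2)"])
  have "summable (\<lambda>n. inverse (real n ^ 2))" by (rule inverse_power_summable) simp
  then show "summable (\<lambda>m. inverse (real (Suc m) ^ 2))" by (subst summable_Suc_iff)
  show "\<exists>N. \<forall>n\<ge>N. norm (1 / (real (n + 1) * real (n + 2))) \<le> inverse (real (Suc n) ^ 2)"
  proof (intro exI[of _ 0] allI impI)
    fix n :: nat
    have "real (Suc n) ^ 2 \<le> real (n+1) * real (n+2)" by (simp add: power2_eq_square)
    from le_imp_inverse_le[OF this] have "inverse (real (n+1) * real (n+2)) \<le> inverse (real (Suc n) ^ 2)"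
      by simp
    then show "norm (1 / (real (n + 1) * real (n + 2))) \<le> inverse (real (Suc n) ^ 2)"
      using abs_of_nonneg[of "1 / (real (n + 1) * real (n + 2))"]
      by (simp only: real_norm_def divide_inverse mult_1) simp
  qed
qed

lemma lemF:
  fixes z :: complex assumes z1: "norm z \<le> 1" and zn: "z \<noteq> 1"
  shows "(\<lambda>m. z^(m+2) / (of_nat (m+1) * of_nat (m+2))) sums (z + (1 - z) * Ln (1 - z))"
proof (cases "norm z < 1")
  case True then show ?thesis by (rule lemF_int)
next
  case False
  define t where "t = (\<lambda>m (w::complex). w^(m+2) / (of_nat (m+1) * of_nat (m+2)))"
  define S where "S = (\<lambda>w. suminf (\<lambda>m. t m w))"
  define G where "G = (\<lambda>w::complex. w + (1 - w) * Ln (1 - w))"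
  have bnd: "norm (t m w) \<le> 1 / (real (m+1) * real (m+2))" if "w \<in> cball 0 1" for m w
  proof -
    have "norm w \<le> 1" using that by simp
    then have "norm w ^ (m+2) \<le> 1" by (intro power_le_one) auto
    then have "norm (w^(m+2)) \<le> 1" by (simp only: norm_power)
    moreover have "norm (t m w) = norm (w^(m+2)) / (real (m+1) * real (m+2))"
      unfolding t_def by (simp only: norm_divide norm_mult norm_of_nat)
    ultimately show ?thesis by (simp add: divide_right_mono)
  qed
  have ul: "uniform_limit (cball 0 1) (\<lambda>n w. \<Sum>i<n. t i w) S sequentially"
    unfolding S_def by (rule Weierstrass_m_test[OF bnd summable_M])
  have cS: "continuous_on (cball 0 1) S"
    by (rule uniform_limit_theorem[OF _ ul]) (auto intro!: always_eventually simp only: t_def divide_inverse intro!: continuous_intros, simp)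
  have summ: "summable (\<lambda>m. t m w)" if "w \<in> cball 0 1" for w
    by (rule summable_comparison_test[OF _ summable_M]) (use bnd that in auto)
  define w where "w = (\<lambda>k::nat. complex_of_real (1 - 1 / real (k+2)) * z)"
  have wlim: "w \<longlonglongrightarrow> z"
  proof -
    have "(\<lambda>k. 1 - 1 / real (k+2)) \<longlonglongrightarrow> 1" by real_asymp
    from tendsto_mult_right[OF tendsto_of_real[OF this], of z] show ?thesis
      unfolding w_def by simp
  qed
  have wn: "norm (w k) < 1" for k
  proof -
    have ab: "\<bar>1 - 1 / real (k+2)\<bar> = 1 - 1 / real (k+2)"
      by (rule abs_of_nonneg) (simp add: field_simps)
    have "norm (w k) = \<bar>1 - 1 / real (k+2)\<bar> * norm z"
      by (simp only: w_def norm_mult norm_of_real)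
    also have "\<dots> = (1 - 1 / real (k+2)) * norm z" by (simp only: ab)
    also have "\<dots> \<le> 1 - 1 / real (k+2)" using z1 by (intro mult_left_le) auto
    also have "\<dots> < 1" by simp
    finally show ?thesis .
  qed
  have SG: "S (w k) = G (w k)" for k
    using sums_unique[OF lemF_int[OF wn[of k]]] unfolding S_def G_def t_def by simp
  have l1: "(\<lambda>k. S (w k)) \<longlonglongrightarrow> S z"
    using continuous_on_tendsto_compose[OF cS wlim] z1 wn
    by (auto simp: less_imp_le)
  have "Re z < 1"
  proof (rule ccontr)
    assume "\<not> Re z < 1"
    then have "Re z \<ge> 1" by simp
    moreover have "Re z \<le> 1" using complex_Re_le_cmod[of z] z1 by linarith
    ultimately have "Re z = 1" by simp
    moreover have "(Re z)^2 + (Im z)^2 \<le> 1"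
      using z1 by (simp add: cmod_def)
    ultimately have "Im z = 0" by simp
    with \<open>Re z = 1\<close> have "z = 1" by (simp add: complex_eq_iff)
    with zn show False by simp
  qed
  then have nr: "1 - z \<notin> \<real>\<^sub>\<le>\<^sub>0" by (simp add: complex_nonpos_Reals_iff)
  have "isCont G z" unfolding G_def using nr by (intro continuous_intros) auto
  then have l2: "(\<lambda>k. G (w k)) \<longlonglongrightarrow> G z"
    using isCont_tendsto_compose wlim by blast
  have "S z = G z" using LIMSEQ_unique[OF l1] l2 SG by simp
  moreover have "(\<lambda>m. t m z) sums S z" unfolding S_def using summ z1 by (simp add: summable_sums)
  ultimately show ?thesis unfolding t_def G_def by simp
qed


lemma Ln_nat_div: "a > 0 \<Longrightarrow> b > 0 \<Longrightarrow> Ln (of_nat a / of_nat b) = of_real (ln (real a / real b))"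
proof -
  assume "a > 0" "b > 0"
  have "(of_nat a / of_nat b :: complex) = of_real (real a / real b)" by simp
  moreover have "real a / real b > 0" using \<open>a > 0\<close> \<open>b > 0\<close> by simp
  ultimately show ?thesis by (subst \<open>_ = _\<close>) (rule Ln_of_real)
qed

lemma ln_plus: "ln (1 + 1 / real (m+2)) = ln (real (Suc (Suc (Suc m))) / real (Suc (Suc m)))"
proof -
  have "1 + 1 / real (m+2) = real (Suc (Suc (Suc m))) / real (Suc (Suc m))" by (simp add: field_simps)
  then show ?thesis by simp
qed

lemma ln_minus: "- ln (1 - 1 / real (m+2)) = ln (real (Suc (Suc m)) / real (Suc m))"
proof -
  have "1 - 1 / real (m+2) = inverse (real (Suc (Suc m)) / real (Suc m))" by (simp add: field_simps)
  then show ?thesis by (simp add: ln_inverse ln_div)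
qed

lemma norm_bnd:
  fixes z :: complex assumes "norm z \<le> 1"
  shows "norm (z^(m+2)) / (real (m+2) ^ (j+2) * real (j+2)) \<le> 1 / real (m+2) ^ 2 * (1/2) ^ j"
proof -
  have n1: "norm (z^(m+2)) \<le> 1" using assms by (simp only: norm_power) (intro power_le_one, auto)
  have p: "real (m+2) ^ 2 * 2 ^ j \<le> real (m+2) ^ (j+2)"
  proof -
    have "(2::real) ^ j \<le> real (m+2) ^ j" by (intro power_mono) auto
    from mult_left_mono[OF this, of "real (m+2) ^ 2"]
    have "real (m+2) ^ 2 * 2 ^ j \<le> real (m+2) ^ 2 * real (m+2) ^ j" by simp
    also have "\<dots> = real (m+2) ^ (j+2)" by (simp only: power_add mult.commute)
    finally show ?thesis .
  qed
  have d: "real (m+2) ^ 2 * 2 ^ j \<le> real (m+2) ^ (j+2) * real (j+2)"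
  proof -
    have "real (m+2) ^ (j+2) * 1 \<le> real (m+2) ^ (j+2) * real (j+2)" by (intro mult_left_mono) auto
    from order.trans[OF p this[unfolded mult_1_right]] show ?thesis .
  qed
  have "norm (z^(m+2)) / (real (m+2) ^ (j+2) * real (j+2)) \<le> 1 / (real (m+2) ^ (j+2) * real (j+2))"
    using n1 by (intro divide_right_mono) auto
  also have "\<dots> \<le> 1 / (real (m+2) ^ 2 * 2 ^ j)"
    using d by (intro divide_left_mono) auto
  also have "\<dots> = 1 / real (m+2) ^ 2 * (1/2) ^ j" by (simp add: power_one_over)
  finally show ?thesis .
qed

lemma summ_M2: "summable (\<lambda>m. 1 / real (m+2) ^ 2)"
proof -
  have "summable (\<lambda>n. inverse (real n ^ 2))" by (rule inverse_power_summable) simp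
  then have "summable (\<lambda>m. inverse (real (m+2) ^ 2))" by (subst summable_iff_shift)
  then show ?thesis by (simp add: divide_inverse)
qed

lemma polylog_shift:
  fixes z :: complex assumes z1: "norm z \<le> 1" and k: "k \<ge> 2"
  shows "(\<lambda>m. z^(m+2) / of_nat (m+2) ^ k) sums (polylog k z - z)"
proof -
  have s: "summable (\<lambda>m. z^(Suc m) / of_nat (Suc m) ^ k)"
  proof (rule summable_comparison_test[of _ "\<lambda>m. inverse (real (Suc m) ^ 2)"])
    have "summable (\<lambda>n. inverse (real n ^ 2))" by (rule inverse_power_summable) simp
    then show "summable (\<lambda>m. inverse (real (Suc m) ^ 2))" by (subst summable_Suc_iff)
    show "\<exists>N. \<forall>n\<ge>N. norm (z^(Suc n) / of_nat (Suc n) ^ k) \<le> inverse (real (Suc n) ^ 2)"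
    proof (intro exI[of _ 0] allI impI)
      fix n :: nat
      have n1: "norm (z^(Suc n)) \<le> 1" using z1 by (simp only: norm_power) (intro power_le_one, auto)
      have "real (Suc n) ^ 2 \<le> real (Suc n) ^ k" using k by (intro power_increasing) auto
      then have i: "inverse (real (Suc n) ^ k) \<le> inverse (real (Suc n) ^ 2)"
        by (intro le_imp_inverse_le) auto
      have "norm (z^(Suc n) / of_nat (Suc n) ^ k) = norm (z^(Suc n)) / real (Suc n) ^ k"
        by (simp only: norm_divide norm_power norm_of_nat)
      also have "\<dots> \<le> 1 / real (Suc n) ^ k" using n1 by (intro divide_right_mono) auto
      also have "\<dots> \<le> inverse (real (Suc n) ^ 2)" using i by (simp add: divide_inverse)
      finally show "norm (z^(Suc n) / of_nat (Suc n) ^ k) \<le> inverse (real (Suc n) ^ 2)" .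
    qed
  qed
  have "(\<lambda>m. z^(Suc m) / of_nat (Suc m) ^ k) sums polylog k z"
    unfolding polylog_def using s by (rule summable_sums)
  then have "(\<lambda>m. z^(Suc (Suc m)) / of_nat (Suc (Suc m)) ^ k) sums (polylog k z - z)"
    by (subst sums_Suc_iff) simp
  moreover have "(\<lambda>m. z^(Suc (Suc m)) / of_nat (Suc (Suc m)) ^ k) = (\<lambda>m. z^(m+2) / of_nat (m+2) ^ k)"
    by (simp add: numeral_2_eq_2)
  ultimately show ?thesis by simp
qed

lemma aux: "P - Q = -R \<Longrightarrow> (w::complex) * P - w * (Q - L) = w * (L - R)"
proof -
  assume h: "P - Q = -R"
  have "w * P - w * (Q - L) = w * (P - Q) + w * L" by (simp add: algebra_simps)
  also have "\<dots> = w * (-R) + w * L" using h by simp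
  also have "\<dots> = w * (L - R)" by (simp add: algebra_simps)
  finally show ?thesis .
qed

theorem theorem3:
  fixes z :: complex
  assumes "norm z \<le> 1"
  shows "(\<lambda>j. (-1) ^ (j + 2) * polylog (j + 2) z / of_nat (j + 2))
           sums (z * gen_euler_gamma z)
         \<and> (z \<noteq> 1 \<longrightarrow>
             (\<lambda>j. (polylog (j + 2) z - z) / of_nat (j + 2))
               sums (z + (1 - z) * Ln (1 - z) - z\<^sup>2 * gen_euler_gamma z))"
proof (cases "z = 0")
  case True
  have "polylog k 0 = 0" for k by (simp add: polylog_def)
  then show ?thesis using True by simp
next
  case znz: False
  note z1 = assms
  define x where "x = (\<lambda>m::nat. 1 / real (m+2))"
  have xl: "\<bar>x m\<bar> < 1" for m by (simp add: x_def)
  define M where "M = (\<lambda>m::nat. 1 / real (m+2) ^ 2)"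
  define r where "r = (\<lambda>j::nat. (1/2::real) ^ j)"
  have sM: "summable M" unfolding M_def by (rule summ_M2)
  have sr: "summable r" unfolding r_def by (rule summable_geometric) simp
  have M0: "M m \<ge> 0" for m by (simp add: M_def)
  have r0: "r j \<ge> 0" for j by (simp add: r_def)
  define tm where "tm = (\<lambda>m. z ^ m * (1 / of_nat (Suc m) - Ln (of_nat (Suc (Suc m)) / of_nat (Suc m))))"
  have gam: "gen_euler_gamma z = suminf tm" unfolding gen_euler_gamma_def tm_def ..
  define f1 where "f1 = (\<lambda>m j. (-1)^j * z^(m+2) / of_nat (m+2) ^ (j+2) / of_nat (j+2) :: complex)"
  define A1 where "A1 = (\<lambda>m. z^(m+2) * of_real (x m - ln (1 + x m)))"
  define C1 where "C1 = (\<lambda>j. (-1)^j * (polylog (j+2) z - z) / of_nat (j+2))"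
  have nf1: "norm (f1 m j) = norm (z^(m+2)) / (real (m+2) ^ (j+2) * real (j+2))" for m j
    unfolding f1_def by (simp only: norm_divide norm_mult norm_power norm_minus_cancel norm_one power_one norm_of_nat mult_1) (simp add: divide_divide_eq_left)
  have b1: "norm (f1 m j) \<le> M m * r j" for m j
    unfolding nf1 M_def r_def by (rule norm_bnd[OF z1])
  have row1: "(\<lambda>j. f1 m j) sums A1 m" for m
  proof -
    from sums_mult[OF sums_of_real[OF ser_alt[OF xl[of m]]], of "z^(m+2)"]
    have "(\<lambda>j. z^(m+2) * of_real ((-1)^j * x m^(j+2) / real (j+2))) sums A1 m"
      unfolding A1_def by simp
    moreover have "z^(m+2) * of_real ((-1)^j * x m^(j+2) / real (j+2)) = f1 m j" for j
      unfolding f1_def x_def by (simp add: power_one_over)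
    ultimately show ?thesis by simp
  qed
  have col1: "(\<lambda>m. f1 m j) sums C1 j" for j
  proof -
    from sums_mult[OF polylog_shift[OF z1, of "j+2"], of "(-1)^j / of_nat (j+2)"]
    have "(\<lambda>m. (-1)^j / of_nat (j+2) * (z^(m+2) / of_nat (m+2) ^ (j+2))) sums C1 j"
      unfolding C1_def by simp
    moreover have "(-1)^j / of_nat (j+2) * (z^(m+2) / of_nat (m+2) ^ (j+2)) = f1 m j" for m
      unfolding f1_def by simp
    ultimately show ?thesis by simp
  qed
  from dbl_swap[OF b1 sM sr M0 r0 row1 col1]
  have A1s: "A1 sums (\<Sum>m. A1 m)" and C1s: "C1 sums (\<Sum>m. A1 m)" by auto
  have ah: "(\<lambda>j. z * of_real ((-1)^j / real (j+2))) sums (z * of_real (1 - ln 2))"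
    by (intro sums_mult sums_of_real alt_harm)
  have T1: "(\<lambda>j. (-1) ^ (j + 2) * polylog (j + 2) z / of_nat (j + 2)) sums ((\<Sum>m. A1 m) + z * of_real (1 - ln 2))"
  proof -
    have "(\<lambda>j. C1 j + z * of_real ((-1)^j / real (j+2))) sums ((\<Sum>m. A1 m) + z * of_real (1 - ln 2))"
      by (intro sums_add C1s ah)
    moreover have "C1 j + z * of_real ((-1)^j / real (j+2)) = (-1) ^ (j + 2) * polylog (j + 2) z / of_nat (j + 2)" for j
    proof -
      have nz0: "of_nat (j+2) \<noteq> (0::complex)" by (simp only: of_nat_eq_0_iff)
      have nz: "of_nat j + 2 \<noteq> (0::complex)" using nz0 by (simp only: of_nat_add of_nat_numeral, simp)
      have e1: "z * of_real ((-1)^j / real (j+2)) = (-1)^j * z / of_nat (j+2)" by simp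
      show ?thesis unfolding C1_def e1 add_divide_distrib[symmetric] by (simp add: algebra_simps)
    qed
    ultimately show ?thesis by simp
  qed
  have tmA: "z * tm (Suc m) = A1 m" for m
  proof -
    have "Ln (of_nat (Suc (Suc (Suc m))) / of_nat (Suc (Suc m))) = of_real (ln (1 + x m))"
      unfolding x_def ln_plus by (rule Ln_nat_div) auto
    moreover have "(1 / of_nat (Suc (Suc m)) :: complex) = of_real (x m)" unfolding x_def by simp
    ultimately show ?thesis unfolding tm_def A1_def by (simp add: algebra_simps)
  qed
  have tm0: "tm 0 = of_real (1 - ln 2)"
  proof -
    have "Ln (of_nat (Suc (Suc 0)) / of_nat (Suc 0)) = of_real (ln (real (Suc (Suc 0)) / real (Suc 0)))"
      by (rule Ln_nat_div) auto
    then show ?thesis unfolding tm_def by simp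
  qed
  have "(\<lambda>m. z * tm (Suc m)) sums (\<Sum>m. A1 m)" unfolding tmA by (rule A1s)
  then have ztm: "(\<lambda>m. z * tm m) sums ((\<Sum>m. A1 m) + z * tm 0)"
    by (subst (asm) sums_Suc_iff)
  from sums_mult[OF ztm, of "1/z"] znz
  have tms: "tm sums (((\<Sum>m. A1 m) + z * tm 0) / z)" by simp
  then have zg: "z * gen_euler_gamma z = (\<Sum>m. A1 m) + z * of_real (1 - ln 2)"
    unfolding gam using znz tm0 by (simp add: sums_iff)
  have P1: "(\<lambda>j. (-1) ^ (j + 2) * polylog (j + 2) z / of_nat (j + 2)) sums (z * gen_euler_gamma z)"
    using T1 zg by simp
  have P2: "(\<lambda>j. (polylog (j + 2) z - z) / of_nat (j + 2))
               sums (z + (1 - z) * Ln (1 - z) - z\<^sup>2 * gen_euler_gamma z)" if z1': "z \<noteq> 1"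
  proof -
    define f2 where "f2 = (\<lambda>m j. z^(m+2) / of_nat (m+2) ^ (j+2) / of_nat (j+2) :: complex)"
    define A2 where "A2 = (\<lambda>m. z^(m+2) * of_real (- ln (1 - x m) - x m))"
    define C2 where "C2 = (\<lambda>j. (polylog (j+2) z - z) / of_nat (j+2))"
    have nf2: "norm (f2 m j) = norm (z^(m+2)) / (real (m+2) ^ (j+2) * real (j+2))" for m j
      unfolding f2_def by (simp only: norm_divide norm_mult norm_power norm_minus_cancel norm_one power_one norm_of_nat mult_1) (simp add: divide_divide_eq_left)
    have b2: "norm (f2 m j) \<le> M m * r j" for m j
      unfolding nf2 M_def r_def by (rule norm_bnd[OF z1])
    have row2: "(\<lambda>j. f2 m j) sums A2 m" for m
    proof -
      from sums_mult[OF sums_of_real[OF ser_pos[OF xl[of m]]], of "z^(m+2)"]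
      have "(\<lambda>j. z^(m+2) * of_real (x m^(j+2) / real (j+2))) sums A2 m"
        unfolding A2_def by simp
      moreover have "z^(m+2) * of_real (x m^(j+2) / real (j+2)) = f2 m j" for j
        unfolding f2_def x_def by (simp add: power_one_over)
      ultimately show ?thesis by simp
    qed
    have col2: "(\<lambda>m. f2 m j) sums C2 j" for j
    proof -
      from sums_divide[OF polylog_shift[OF z1, of "j+2"], of "of_nat (j+2)"]
      show ?thesis unfolding C2_def f2_def by simp
    qed
    from dbl_swap[OF b2 sM sr M0 r0 row2 col2]
    have C2s: "C2 sums (\<Sum>m. A2 m)" by auto
    have E: "(\<lambda>m. z^(m+2) / (of_nat (m+1) * of_nat (m+2))) sums (z + (1 - z) * Ln (1 - z))"
      by (rule lemF[OF z1 z1'])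
    have ztm2: "(\<lambda>m. z\<^sup>2 * tm m) sums (z\<^sup>2 * gen_euler_gamma z)"
      unfolding gam using tms by (intro sums_mult) (auto simp: sums_iff)
    have D: "(\<lambda>m. z^(m+2) / (of_nat (m+1) * of_nat (m+2)) - z\<^sup>2 * tm m) sums
               (z + (1 - z) * Ln (1 - z) - z\<^sup>2 * gen_euler_gamma z)"
      by (rule sums_diff[OF E ztm2])
    have eqA: "z^(m+2) / (of_nat (m+1) * of_nat (m+2)) - z\<^sup>2 * tm m = A2 m" for m
    proof -
      have L: "Ln (of_nat (Suc (Suc m)) / of_nat (Suc m)) = of_real (- ln (1 - x m))"
        unfolding x_def ln_minus by (rule Ln_nat_div) auto
      have h1: "(of_nat (m+1)::complex) \<noteq> 0" and h2: "(of_nat (m+2)::complex) \<noteq> 0"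
        by (simp only: of_nat_eq_0_iff; simp)+
      have xm: "(of_real (x m) :: complex) = 1 / of_nat (m+2)" unfolding x_def by simp
      have fr: "1/(a*(a+1)) - 1/a = -(1/(a+1))" if "a > 0" for a :: real
        using that by (smt (verit, ccfv_SIG) diff_divide_distrib
          nonzero_divide_mult_cancel_left nonzero_divide_mult_cancel_right)
      have rr: "1 / (real (m+1) * real (m+2)) - 1 / real (Suc m) = - (1 / real (m+2))"
        using fr[of "real (m+1)"] by (simp add: add.commute add.left_commute)
      have "1 / (of_nat (m+1) * of_nat (m+2)) - 1 / of_nat (Suc m) = - (1 / of_nat (m+2) :: complex)"
        using arg_cong[OF rr, of complex_of_real] by simp
      note K = this
      have g1: "z^(m+2) / (of_nat (m+1) * of_nat (m+2)) = z^(m+2) * (1 / (of_nat (m+1) * of_nat (m+2)))"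
        by simp
      have g2: "z\<^sup>2 * tm m = z^(m+2) * (1 / of_nat (Suc m) - Ln (of_nat (Suc (Suc m)) / of_nat (Suc m)))"
        unfolding tm_def by (simp only: power_add mult_ac)
      have g3: "A2 m = z^(m+2) * (Ln (of_nat (Suc (Suc m)) / of_nat (Suc m)) - 1 / of_nat (m+2))"
        unfolding A2_def of_real_diff L xm ..
      show ?thesis unfolding g1 g2 g3 by (rule aux[OF K])
    qed
    from D have "A2 sums (z + (1 - z) * Ln (1 - z) - z\<^sup>2 * gen_euler_gamma z)"
      unfolding eqA .
    with C2s show ?thesis unfolding C2_def by (simp add: sums_iff)
  qed
  show ?thesis using P1 P2 by blast
qed

end
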